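(* Let $T$ be a set (of traits) with a binary relation $\preceq$ on $T$, and for every link $k$ and every $t\in T$ let $t\oplus k\subseteq T$ be a set of traits. Assume that for all $t_i,t_j\in T$ and every link $k$: if $t_i\preceq t_j$ then for every $t\in t_j\oplus k$ there exists $t'\in t_i\oplus k$ with $t'\preceq t$. Fix a link $k$ leaving the common end node of the two routes, and for a label $l=(t_1,t_2)$ whose both routes end at that node let $l\oplus e=\{(t,t_2): t\in t_1\oplus k\}\cup\{(t,t_1): t\in t_2\oplus k\}$ (the link may be appended to either route; the extended route's trait is listed first, and afterwards the routes end at different nodes). Let $l_i=(t_i,t'_i)$ and $l_j=(t_j,t'_j)$ be such labels. If $l_i\preceq_= l_j$, then for every $l\in l_j\oplus e$ there exists $l'\in l_i\oplus e$ with $l'\preceq_{\ne} l$.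
   Context: Setting: a network with nodes and links; a trait records the information needed to set up a connection along a route; $t\oplus k$ is the set of traits derived by appending link $k$ to a route with trait $t$; $\preceq$ means "better than or equal to". A label is a pair of traits of two link-disjoint routes. For labels $l_i=(t_i,t'_i)$, $l_j=(t_j,t'_j)$ whose both routes end at the same node: $l_i\preceq_n l_j$ iff $t_i\preceq t_j$ and $t'_i\preceq t'_j$; $l_i\preceq_x l_j$ iff $t_i\preceq t'_j$ and $t'_i\preceq t_j$; $l_i\preceq_= l_j$ iff $l_i\preceq_n l_j$ or $l_i\preceq_x l_j$. For labels $(a,b)$, $(c,d)$ whose routes end at different nodes: $(a,b)\preceq_{\ne}(c,d)$ iff $a\preceq c$ and $b\preceq d$. *)

theory Defs
  imports Main
begin

text \<open>Labels are pairs of traits. le is the relation "better than or equal to" on traits,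
  ext t k is the set of traits t (+) k.\<close>

definition label_le_n :: "('a \<Rightarrow> 'a \<Rightarrow> bool) \<Rightarrow> 'a \<times> 'a \<Rightarrow> 'a \<times> 'a \<Rightarrow> bool" where
  "label_le_n le li lj \<longleftrightarrow> le (fst li) (fst lj) \<and> le (snd li) (snd lj)"

definition label_le_x :: "('a \<Rightarrow> 'a \<Rightarrow> bool) \<Rightarrow> 'a \<times> 'a \<Rightarrow> 'a \<times> 'a \<Rightarrow> bool" where
  "label_le_x le li lj \<longleftrightarrow> le (fst li) (snd lj) \<and> le (snd li) (fst lj)"

definition label_le_eq :: "('a \<Rightarrow> 'a \<Rightarrow> bool) \<Rightarrow> 'a \<times> 'a \<Rightarrow> 'a \<times> 'a \<Rightarrow> bool" where
  "label_le_eq le li lj \<longleftrightarrow> label_le_n le li lj \<or> label_le_x le li lj"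

definition label_le_ne :: "('a \<Rightarrow> 'a \<Rightarrow> bool) \<Rightarrow> 'a \<times> 'a \<Rightarrow> 'a \<times> 'a \<Rightarrow> bool" where
  "label_le_ne le l1 l2 \<longleftrightarrow> le (fst l1) (fst l2) \<and> le (snd l1) (snd l2)"

definition label_ext :: "('a \<Rightarrow> 'k \<Rightarrow> 'a set) \<Rightarrow> 'a \<times> 'a \<Rightarrow> 'k \<Rightarrow> ('a \<times> 'a) set" where
  "label_ext ext l k = {(t, snd l) | t. t \<in> ext (fst l) k} \<union> {(t, fst l) | t. t \<in> ext (snd l) k}"

end

theory Submission
  imports Defs
begin

theorem proposition3:
  fixes T :: "'a set" and le :: "'a \<Rightarrow> 'a \<Rightarrow> bool" and ext :: "'a \<Rightarrow> 'k \<Rightarrow> 'a set"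
    and k :: 'k and li lj :: "'a \<times> 'a"
  assumes ext_in_T: "\<And>t k. t \<in> T \<Longrightarrow> ext t k \<subseteq> T"
    and mono: "\<And>ti tj k t. ti \<in> T \<Longrightarrow> tj \<in> T \<Longrightarrow> le ti tj \<Longrightarrow> t \<in> ext tj k \<Longrightarrow>
                 \<exists>t' \<in> ext ti k. le t' t"
    and li_T: "fst li \<in> T" "snd li \<in> T"
    and lj_T: "fst lj \<in> T" "snd lj \<in> T"
    and hle: "label_le_eq le li lj"
  shows "\<forall>l \<in> label_ext ext lj k. \<exists>l' \<in> label_ext ext li k. label_le_ne le l' l"
proof
  fix l assume l: "l \<in> label_ext ext lj k"
  obtain ai bi where li: "li = (ai, bi)" by (cases li)
  obtain a b where lj: "lj = (a, b)" by (cases lj)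
  have T: "ai \<in> T" "bi \<in> T" "a \<in> T" "b \<in> T" using li_T lj_T li lj by auto
  from l have cs: "(\<exists>t. l = (t, b) \<and> t \<in> ext a k) \<or> (\<exists>t. l = (t, a) \<and> t \<in> ext b k)"
    by (auto simp: label_ext_def lj)
  from hle have "(le ai a \<and> le bi b) \<or> (le ai b \<and> le bi a)"
    by (auto simp: label_le_eq_def label_le_n_def label_le_x_def li lj)
  then show "\<exists>l' \<in> label_ext ext li k. label_le_ne le l' l"
  proof
    assume h: "le ai a \<and> le bi b"
    show ?thesis using cs
    proof
      assume "\<exists>t. l = (t, b) \<and> t \<in> ext a k"
      then obtain t where t: "l = (t, b)" "t \<in> ext a k" by blast
      obtain t' where "t' \<in> ext ai k" "le t' t" using mono[OF T(1) T(3)] h t by blast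
      then show ?thesis using h t
        by (intro bexI[of _ "(t', bi)"]) (auto simp: label_ext_def label_le_ne_def li)
    next
      assume "\<exists>t. l = (t, a) \<and> t \<in> ext b k"
      then obtain t where t: "l = (t, a)" "t \<in> ext b k" by blast
      obtain t' where "t' \<in> ext bi k" "le t' t" using mono[OF T(2) T(4)] h t by blast
      then show ?thesis using h t
        by (intro bexI[of _ "(t', ai)"]) (auto simp: label_ext_def label_le_ne_def li)
    qed
  next
    assume h: "le ai b \<and> le bi a"
    show ?thesis using cs
    proof
      assume "\<exists>t. l = (t, b) \<and> t \<in> ext a k"
      then obtain t where t: "l = (t, b)" "t \<in> ext a k" by blast
      obtain t' where "t' \<in> ext bi k" "le t' t" using mono[OF T(2) T(3)] h t by blast
      then show ?thesis using h t
        by (intro bexI[of _ "(t', ai)"]) (auto simp: label_ext_def label_le_ne_def li)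
    next
      assume "\<exists>t. l = (t, a) \<and> t \<in> ext b k"
      then obtain t where t: "l = (t, a)" "t \<in> ext b k" by blast
      obtain t' where "t' \<in> ext ai k" "le t' t" using mono[OF T(1) T(4)] h t by blast
      then show ?thesis using h t
        by (intro bexI[of _ "(t', bi)"]) (auto simp: label_ext_def label_le_ne_def li)
    qed
  qed
qed

end
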